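(* The modified multiplicative price update algorithm is a truthful mechanism without money and with verification for CAs with unknown $k$-minded bidders and goods of supply $b$; it outputs an allocation in which each good is allocated at most $b$ times, and its approximation ratio is $O(b\, m^{1/b})$.
   Context: Multi-unit combinatorial auction: a set $\mathsf U$ of $m$ goods, each with supply $b\ge1$; $n$ bidders. True type of bidder $i$: $t_i=(v_i,\mathcal S_i)$ with $\mathcal S_i$ a private collection of $k$ nonempty subsets of $\mathsf U$ and $v_i:\mathcal S_i\to\mathbb R_{\ge0}$ private, extended by $v_i(T)=\max\{v_i(S'):S'\in\mathcal S_i,S'\subseteq T\}$ ($0$ if none). Declarations $(w,\mathcal W)$ have the same form. Modified multiplicative price update algorithm on declarations $(w_i,\mathcal W_i)$: let $v^i_{\max}=\max_{S\in\mathcal W_i}w_i(S)$; let $j$ be the bidder with largest $v^j_{\max}$ (smallest index on ties); set $\mu=(1+\epsilon)v^j_{\max}$ for a fixed $0<\epsilon\ll1$, $p_0=\mu/(4bm)$, $r=(4bm)^{1/b}$, and initial prices $p_e=p_0$; process bidders in the order $j,1,2,\dots,j-1,j+1,\dots,n$; when processing bidder $i$, let $S_i$ maximize $w_i(S)$ over $S\in\mathcal W_i$ with $w_i(S)\ge\sum_{e\in S}p_e$ (current prices; $S_i=\emptyset$ if none), allocate $S_i$ to $i$, and multiply $p_e$ by $r$ for every $e\in S_i$. Verification: bidder $i$ with true type $t_i$ facing $\mathbf b_{-i}$ may declare $b_i=(z,\mathcal T)$ only if $z(A_i(b_i,\mathbf b_{-i}))\le v_i(A_i(b_i,\mathbf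 b_{-i}))$. Truthful without money and with verification: for all $i$, $\mathbf b_{-i}$, true types $t_i$ and declarations $b_i$ permitted by verification, $v_i(A_i(t_i,\mathbf b_{-i}))\ge v_i(A_i(b_i,\mathbf b_{-i}))$. Approximation ratio $\alpha$: on every truthful input, the social welfare $\sum_i v_i(A_i)$ is at least $\mathrm{OPT}/\alpha$, where $\mathrm{OPT}$ is the maximum social welfare over allocations assigning each good at most $b$ times. *)

theory Defs
  imports Complex_Main
begin

text \<open>A declaration (or true type) is a pair (w, W): a valuation on sets of goods
 (only its values on W are meaningful) and a collection W of demanded sets.\<close>
type_synonym 'g decl = "('g set \<Rightarrow> real) \<times> 'g set set"

definition valid_decl :: "'g set \<Rightarrow> nat \<Rightarrow> 'g decl \<Rightarrow> bool" where
  "valid_decl U k d \<longleftrightarrow> finite (snd d) \<and> card (snd d) = k \<and>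
     (\<forall>S\<in>snd d. S \<noteq> {} \<and> S \<subseteq> U \<and> fst d S \<ge> 0)"

definition ext_val :: "'g decl \<Rightarrow> 'g set \<Rightarrow> real" where
  "ext_val d T = (if \<exists>S\<in>snd d. S \<subseteq> T
                  then Max {fst d S | S. S \<in> snd d \<and> S \<subseteq> T} else 0)"

definition vmax :: "'g decl \<Rightarrow> real" where
  "vmax d = (if snd d = {} then 0 else Max (fst d ` snd d))"

definition leader :: "nat \<Rightarrow> (nat \<Rightarrow> 'g decl) \<Rightarrow> nat" where
  "leader n d = (LEAST j. j < n \<and> (\<forall>i<n. vmax (d i) \<le> vmax (d j)))"

definition proc_order :: "nat \<Rightarrow> nat \<Rightarrow> nat list" where
  "proc_order n j = j # filter (\<lambda>i. i \<noteq> j) [0..<n]"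

definition choose_set :: "'g decl \<Rightarrow> ('g \<Rightarrow> real) \<Rightarrow> 'g set" where
  "choose_set d p = (let F = {S \<in> snd d. fst d S \<ge> (\<Sum>e\<in>S. p e)} in
     if F = {} then {} else (SOME S. S \<in> F \<and> (\<forall>S'\<in>F. fst d S' \<le> fst d S)))"

definition mpu_step :: "(nat \<Rightarrow> 'g decl) \<Rightarrow> real \<Rightarrow> nat
      \<Rightarrow> ('g \<Rightarrow> real) \<times> (nat \<Rightarrow> 'g set) \<Rightarrow> ('g \<Rightarrow> real) \<times> (nat \<Rightarrow> 'g set)" where
  "mpu_step d r i st = (let S = choose_set (d i) (fst st) in
     ((\<lambda>e. if e \<in> S then r * fst st e else fst st e), (snd st)(i := S)))"

definition mpu :: "'g set \<Rightarrow> nat \<Rightarrow> real \<Rightarrow> nat \<Rightarrow> (nat \<Rightarrow> 'g decl) \<Rightarrow> nat \<Rightarrow> 'g set" where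
  "mpu U b eps n d = (let j = leader n d;
       m = real (card U);
       mu = (1 + eps) * vmax (d j);
       p0 = mu / (4 * real b * m);
       r = (4 * real b * m) powr (1 / real b)
     in snd (fold (mpu_step d r) (proc_order n j) (\<lambda>_. p0, \<lambda>_. {})))"

definition truthful_verif :: "'g set \<Rightarrow> nat \<Rightarrow> nat \<Rightarrow>
      ((nat \<Rightarrow> 'g decl) \<Rightarrow> nat \<Rightarrow> 'g set) \<Rightarrow> bool" where
  "truthful_verif U k n A \<longleftrightarrow>
     (\<forall>i<n. \<forall>d t. (\<forall>j<n. valid_decl U k (d j)) \<longrightarrow> valid_decl U k t \<longrightarrow>
        ext_val (d i) (A d i) \<le> ext_val t (A d i) \<longrightarrow>
        ext_val t (A d i) \<le> ext_val t (A (d(i := t)) i))"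

definition feasible_alloc :: "'g set \<Rightarrow> nat \<Rightarrow> nat \<Rightarrow> (nat \<Rightarrow> 'g set) \<Rightarrow> bool" where
  "feasible_alloc U b n X \<longleftrightarrow> (\<forall>i<n. X i \<subseteq> U) \<and> (\<forall>e. card {i. i < n \<and> e \<in> X i} \<le> b)"

definition welfare :: "nat \<Rightarrow> (nat \<Rightarrow> 'g decl) \<Rightarrow> (nat \<Rightarrow> 'g set) \<Rightarrow> real" where
  "welfare n t X = (\<Sum>i<n. ext_val (t i) (X i))"

end

theory Submission
  imports Defs
begin


lemma ext_val_alt: "ext_val d T = (if \<exists>S\<in>snd d. S \<subseteq> T then Max (fst d ` {S\<in>snd d. S \<subseteq> T}) else 0)"
  unfolding ext_val_def by (simp add: setcompr_eq_image)

lemma ext_nonneg: assumes "valid_decl U k d" shows "0 \<le> ext_val d T"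
proof (cases "\<exists>S\<in>snd d. S \<subseteq> T")
  case True
  then obtain S where S: "S \<in> snd d" "S \<subseteq> T" by blast
  have fin: "finite (fst d ` {S\<in>snd d. S \<subseteq> T})" using assms unfolding valid_decl_def by simp
  have "0 \<le> fst d S" using assms S unfolding valid_decl_def by auto
  also have "\<dots> \<le> Max (fst d ` {S\<in>snd d. S \<subseteq> T})" using fin S by (intro Max_ge) auto
  finally show ?thesis using True by (simp add: ext_val_alt)
qed (simp add: ext_val_alt)

lemma ext_ge: assumes "valid_decl U k d" "S \<in> snd d" "S \<subseteq> T" shows "fst d S \<le> ext_val d T"
proof -
  have fin: "finite (fst d ` {S\<in>snd d. S \<subseteq> T})" using assms unfolding valid_decl_def by simp
  have "fst d S \<le> Max (fst d ` {S\<in>snd d. S \<subseteq> T})" using fin assms by (intro Max_ge) auto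
  thus ?thesis using assms by (auto simp add: ext_val_alt)
qed

lemma ext_attained: assumes "valid_decl U k d" "\<exists>S\<in>snd d. S \<subseteq> T"
  shows "\<exists>S\<in>snd d. S \<subseteq> T \<and> ext_val d T = fst d S"
proof -
  have fin: "finite (fst d ` {S\<in>snd d. S \<subseteq> T})" using assms unfolding valid_decl_def by simp
  have "Max (fst d ` {S\<in>snd d. S \<subseteq> T}) \<in> fst d ` {S\<in>snd d. S \<subseteq> T}"
    using fin assms by (intro Max_in) auto
  thus ?thesis using assms by (auto simp add: ext_val_alt)
qed

lemma vmax_ge: assumes "valid_decl U k d" "S \<in> snd d" shows "fst d S \<le> vmax d"
  using assms unfolding vmax_def valid_decl_def by (auto intro: Max_ge)

lemma vmax_attained: assumes "valid_decl U k d" "k \<ge> 1"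
  shows "\<exists>S\<in>snd d. vmax d = fst d S"
proof -
  have "snd d \<noteq> {}" using assms unfolding valid_decl_def by auto
  moreover have "finite (snd d)" using assms unfolding valid_decl_def by auto
  ultimately have "Max (fst d ` snd d) \<in> fst d ` snd d" by (intro Max_in) auto
  thus ?thesis using \<open>snd d \<noteq> {}\<close> unfolding vmax_def by auto
qed

lemma ext_le_vmax: assumes "valid_decl U k d" shows "ext_val d T \<le> vmax d"
proof (cases "\<exists>S\<in>snd d. S \<subseteq> T")
  case True
  then obtain S where "S\<in>snd d" "ext_val d T = fst d S" using ext_attained[OF assms] by blast
  thus ?thesis using vmax_ge[OF assms] by simp
next
  case False
  hence "ext_val d T = 0" by (simp add: ext_val_alt)
  moreover have "0 \<le> vmax d"
  proof (cases "snd d = {}")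
    case False
    then obtain S where "S \<in> snd d" by auto
    hence "0 \<le> fst d S" using assms unfolding valid_decl_def by auto
    thus ?thesis using vmax_ge[OF assms \<open>S \<in> snd d\<close>] by simp
  qed (simp add: vmax_def)
  ultimately show ?thesis by simp
qed

lemma cs_spec: fixes p :: "'g \<Rightarrow> real" assumes "valid_decl U k d"
  defines "F \<equiv> {S \<in> snd d. fst d S \<ge> (\<Sum>e\<in>S. p e)}"
  shows "(F = {} \<longrightarrow> choose_set d p = {}) \<and>
         (F \<noteq> {} \<longrightarrow> choose_set d p \<in> F \<and> (\<forall>S'\<in>F. fst d S' \<le> fst d (choose_set d p)))"
proof (cases "F = {}")
  case True thus ?thesis unfolding choose_set_def F_def Let_def by simp
next
  case False
  have fin: "finite F" using assms unfolding valid_decl_def F_def by simp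
  have "Max (fst d ` F) \<in> fst d ` F" using fin False by (intro Max_in) auto
  then obtain S where S: "S \<in> F" "fst d S = Max (fst d ` F)" by auto
  have "\<forall>S'\<in>F. fst d S' \<le> fst d S" using S fin by auto
  hence ex: "\<exists>S. S \<in> F \<and> (\<forall>S'\<in>F. fst d S' \<le> fst d S)" using S by blast
  have "choose_set d p = (SOME S. S \<in> F \<and> (\<forall>S'\<in>F. fst d S' \<le> fst d S))"
    using False unfolding choose_set_def Let_def F_def[symmetric] by simp
  have "choose_set d p \<in> F \<and> (\<forall>S'\<in>F. fst d S' \<le> fst d (choose_set d p))"
    using someI_ex[OF ex] \<open>choose_set d p = _\<close> by simp
  thus ?thesis using False by blast
qed

lemma cs_sub: assumes "valid_decl U k d" shows "choose_set d p \<subseteq> U"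
  using cs_spec[OF assms, of p] assms unfolding valid_decl_def by (cases "choose_set d p = {}") auto

lemma cs_in: assumes "valid_decl U k d" "choose_set d p \<noteq> {}"
  shows "choose_set d p \<in> snd d \<and> (\<Sum>e\<in>choose_set d p. p e) \<le> fst d (choose_set d p)"
  using cs_spec[OF assms(1), of p] assms(2) by (cases "{S \<in> snd d. fst d S \<ge> (\<Sum>e\<in>S. p e)} = {}") auto

lemma cs_afford: assumes "valid_decl U k d"
  shows "(\<Sum>e\<in>choose_set d p. p e) \<le> ext_val d (choose_set d p)"
proof (cases "choose_set d p = {}")
  case True thus ?thesis using ext_nonneg[OF assms] by simp
next
  case False
  thus ?thesis using cs_in[OF assms False] ext_ge[OF assms, of "choose_set d p" "choose_set d p"] by auto
qed

lemma cs_best: assumes "valid_decl U k d" "S \<in> snd d" "(\<Sum>e\<in>S. p e) \<le> fst d S"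
  shows "fst d S \<le> ext_val d (choose_set d p)"
proof -
  let ?F = "{S \<in> snd d. fst d S \<ge> (\<Sum>e\<in>S. p e)}"
  have "S \<in> ?F" using assms by auto
  hence "choose_set d p \<in> ?F" "fst d S \<le> fst d (choose_set d p)" using cs_spec[OF assms(1), of p] by auto
  thus ?thesis using ext_ge[OF assms(1), of "choose_set d p" "choose_set d p"] by auto
qed



lemma step_price: "fst (mpu_step d r x st) e = (if e \<in> choose_set (d x) (fst st) then r * fst st e else fst st e)"
  unfolding mpu_step_def Let_def by simp

lemma step_alloc: "snd (mpu_step d r x st) = (snd st)(x := choose_set (d x) (fst st))"
  unfolding mpu_step_def Let_def by simp

lemma fold_untouched: "x \<notin> set xs \<Longrightarrow> snd (fold (mpu_step d r) xs st) x = snd st x"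
  by (induction xs arbitrary: st) (auto simp: step_alloc)

lemma step_nonneg: "0 \<le> r \<Longrightarrow> \<forall>e. 0 \<le> fst st e \<Longrightarrow> \<forall>e. 0 \<le> fst (mpu_step d r x st) e"
  by (auto simp: step_price)

lemma fold_nonneg: "0 \<le> r \<Longrightarrow> \<forall>e. 0 \<le> fst st e \<Longrightarrow> \<forall>e. 0 \<le> fst (fold (mpu_step d r) xs st) e"
  by (induction xs arbitrary: st) (auto simp: step_nonneg)

lemma step_mono: "1 \<le> r \<Longrightarrow> \<forall>e. 0 \<le> fst st e \<Longrightarrow> fst st e \<le> fst (mpu_step d r x st) e"
  by (auto simp: step_price intro: mult_left_le_one_le order.trans[OF _ mult_right_mono[of 1 r]])

lemma fold_mono: "1 \<le> r \<Longrightarrow> \<forall>e. 0 \<le> fst st e \<Longrightarrow> fst st e \<le> fst (fold (mpu_step d r) xs st) e"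
proof (induction xs arbitrary: st)
  case Nil thus ?case by simp
next
  case (Cons x xs)
  have "\<forall>e. 0 \<le> fst (mpu_step d r x st) e" using Cons.prems by (intro step_nonneg) auto
  hence "fst (mpu_step d r x st) e \<le> fst (fold (mpu_step d r) xs (mpu_step d r x st)) e"
    using Cons by blast
  thus ?case using step_mono[where d=d and x=x and e=e, OF Cons.prems] by simp
qed

lemma fold_choice: "distinct xs \<Longrightarrow> i \<in> set xs \<Longrightarrow> 1 \<le> r \<Longrightarrow> \<forall>e. 0 \<le> fst st e \<Longrightarrow>
  \<exists>q. (\<forall>e. 0 \<le> q e \<and> q e \<le> fst (fold (mpu_step d r) xs st) e) \<and>
      snd (fold (mpu_step d r) xs st) i = choose_set (d i) q"
proof (induction xs arbitrary: st)
  case Nil thus ?case by simp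
next
  case (Cons x xs)
  have nn: "\<forall>e. 0 \<le> fst (mpu_step d r x st) e" using Cons.prems by (intro step_nonneg) auto
  show ?case
  proof (cases "i = x")
    case True
    have "snd (fold (mpu_step d r) (x#xs) st) i = choose_set (d i) (fst st)"
      using Cons.prems True by (simp add: fold_untouched step_alloc)
    moreover have "\<forall>e. 0 \<le> fst st e \<and> fst st e \<le> fst (fold (mpu_step d r) (x#xs) st) e"
    proof
      fix e
      have "fst st e \<le> fst (mpu_step d r x st) e" using Cons.prems step_mono[of r st] by blast
      also have "\<dots> \<le> fst (fold (mpu_step d r) xs (mpu_step d r x st)) e"
        using fold_mono[OF _ nn] Cons.prems by blast
      finally show "0 \<le> fst st e \<and> fst st e \<le> fst (fold (mpu_step d r) (x#xs) st) e"
        using Cons.prems by simp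
    qed
    ultimately show ?thesis by blast
  next
    case False
    thus ?thesis using Cons.IH[OF _ _ _ nn] Cons.prems by simp
  qed
qed

lemma fold_split: "i \<notin> set bs \<Longrightarrow>
  snd (fold (mpu_step d r) (as @ i # bs) st) i = choose_set (d i) (fst (fold (mpu_step d r) as st))"
  by (simp add: fold_untouched step_alloc)

lemma fold_cong_d: "\<forall>x\<in>set as. d x = d' x \<Longrightarrow> fold (mpu_step d r) as st = fold (mpu_step d' r) as st"
  by (induction as arbitrary: st) (auto simp: mpu_step_def)

lemma sum_update: fixes r :: real and p :: "'g \<Rightarrow> real" assumes "finite U" "S \<subseteq> U"
  shows "(\<Sum>e\<in>U. if e \<in> S then r * p e else p e) = (\<Sum>e\<in>U. p e) + (r - 1) * (\<Sum>e\<in>S. p e)"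
proof -
  have "(\<Sum>e\<in>U. if e \<in> S then r * p e else p e) = (\<Sum>e\<in>U. p e + (if e \<in> S then (r - 1) * p e else 0))"
    by (intro sum.cong) (auto simp: algebra_simps)
  also have "\<dots> = (\<Sum>e\<in>U. p e) + (\<Sum>e\<in>U. if e \<in> S then (r - 1) * p e else 0)"
    by (simp add: sum.distrib)
  also have "(\<Sum>e\<in>U. if e \<in> S then (r - 1) * p e else 0) = (\<Sum>e\<in>S. (r - 1) * p e)"
    using assms by (simp add: sum.If_cases Int_absorb1)
  finally show ?thesis by (simp add: sum_distrib_left)
qed

lemma fold_sum: "finite U \<Longrightarrow> distinct xs \<Longrightarrow> \<forall>x\<in>set xs. valid_decl U k (d x) \<Longrightarrow> 1 \<le> r \<Longrightarrow>
  \<forall>e. 0 \<le> fst st e \<Longrightarrow>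
  (\<Sum>e\<in>U. fst (fold (mpu_step d r) xs st) e) \<le> (\<Sum>e\<in>U. fst st e)
     + (r - 1) * (\<Sum>x\<in>set xs. ext_val (d x) (snd (fold (mpu_step d r) xs st) x))"
proof (induction xs arbitrary: st)
  case Nil thus ?case by simp
next
  case (Cons x xs)
  let ?st' = "mpu_step d r x st"
  let ?F = "fold (mpu_step d r) xs ?st'"
  let ?S = "choose_set (d x) (fst st)"
  have nn: "\<forall>e. 0 \<le> fst ?st' e" using Cons.prems by (intro step_nonneg) auto
  have vx: "valid_decl U k (d x)" using Cons.prems by simp
  have IH: "(\<Sum>e\<in>U. fst ?F e) \<le> (\<Sum>e\<in>U. fst ?st' e) + (r - 1) * (\<Sum>y\<in>set xs. ext_val (d y) (snd ?F y))"
    using Cons.IH[OF Cons.prems(1) _ _ Cons.prems(4) nn] Cons.prems by simp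
  have "(\<Sum>e\<in>U. fst ?st' e) = (\<Sum>e\<in>U. fst st e) + (r - 1) * (\<Sum>e\<in>?S. fst st e)"
    unfolding step_price by (rule sum_update[OF Cons.prems(1) cs_sub[OF vx]])
  also have "\<dots> \<le> (\<Sum>e\<in>U. fst st e) + (r - 1) * ext_val (d x) ?S"
    using cs_afford[OF vx, of "fst st"] Cons.prems(4) by (simp add: mult_left_mono)
  finally have 1: "(\<Sum>e\<in>U. fst ?st' e) \<le> (\<Sum>e\<in>U. fst st e) + (r - 1) * ext_val (d x) ?S" .
  have "snd ?F x = ?S" using Cons.prems(2) by (simp add: fold_untouched step_alloc)
  moreover have "(\<Sum>y\<in>set (x#xs). ext_val (d y) (snd ?F y)) = ext_val (d x) (snd ?F x) + (\<Sum>y\<in>set xs. ext_val (d y) (snd ?F y))"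
    using Cons.prems(2) by simp
  ultimately show ?case using IH 1 by (simp add: algebra_simps)
qed



definition rr :: "'g set \<Rightarrow> nat \<Rightarrow> real" where
  "rr U b = (4 * real b * real (card U)) powr (1 / real b)"
definition pz :: "'g set \<Rightarrow> nat \<Rightarrow> real \<Rightarrow> real \<Rightarrow> real" where
  "pz U b eps v = (1 + eps) * v / (4 * real b * real (card U))"

lemma mpu_unfold: "mpu U b eps n d = snd (fold (mpu_step d (rr U b)) (proc_order n (leader n d))
     (\<lambda>_. pz U b eps (vmax (d (leader n d))), \<lambda>_. {}))"
  unfolding mpu_def Let_def rr_def pz_def by simp

lemma leader_props: assumes "0 < n"
  shows "leader n d < n \<and> (\<forall>i<n. vmax (d i) \<le> vmax (d (leader n d))) \<and>
         (\<forall>i<leader n d. vmax (d i) < vmax (d (leader n d)))"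
proof -
  let ?M = "Max ((\<lambda>i. vmax (d i)) ` {..<n})"
  have "?M \<in> (\<lambda>i. vmax (d i)) ` {..<n}" using assms by (intro Max_in) auto
  then obtain j0 where j0: "j0 < n" "vmax (d j0) = ?M" by auto
  have "\<forall>i<n. vmax (d i) \<le> vmax (d j0)" using j0 by auto
  hence ex: "\<exists>j. j < n \<and> (\<forall>i<n. vmax (d i) \<le> vmax (d j))" using j0 by blast
  have L: "leader n d < n \<and> (\<forall>i<n. vmax (d i) \<le> vmax (d (leader n d)))"
    unfolding leader_def using LeastI_ex[OF ex] .
  have "\<forall>i<leader n d. vmax (d i) < vmax (d (leader n d))"
  proof (intro allI impI)
    fix i assume i: "i < leader n d"
    hence "\<not> (i < n \<and> (\<forall>i'<n. vmax (d i') \<le> vmax (d i)))"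
      unfolding leader_def by (rule not_less_Least)
    then obtain i' where "i' < n" "vmax (d i') > vmax (d i)" using i L by force
    thus "vmax (d i) < vmax (d (leader n d))" using L by force
  qed
  thus ?thesis using L by blast
qed

lemma leader_unique: assumes "j < n" "\<forall>i<n. vmax (d i) \<le> vmax (d j)" "\<forall>i<j. vmax (d i) < vmax (d j)"
  shows "leader n d = j"
  unfolding leader_def
proof (rule Least_equality)
  show "j < n \<and> (\<forall>i<n. vmax (d i) \<le> vmax (d j))" using assms by blast
next
  fix y assume y: "y < n \<and> (\<forall>i<n. vmax (d i) \<le> vmax (d y))"
  show "j \<le> y"
  proof (rule ccontr)
    assume "\<not> j \<le> y"
    hence "vmax (d y) < vmax (d j)" using assms by simp
    thus False using y assms by force
  qed
qed

lemma proc_order_props: "j < n \<Longrightarrow> distinct (proc_order n j) \<and> set (proc_order n j) = {..<n}"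
  unfolding proc_order_def by auto

lemma rr_ge1: assumes "0 < card U" "1 \<le> b" shows "1 \<le> rr U b"
proof -
  have "1 \<le> b * card U" using assms by (simp add: Suc_le_eq)
  hence "1 \<le> real b * real (card U)" by (metis of_nat_1 of_nat_le_iff of_nat_mult)
  hence "1 \<le> 4 * real b * real (card U)" by simp
  thus ?thesis unfolding rr_def using assms by (intro ge_one_powr_ge_zero) auto
qed

lemma rr_pow: assumes "0 < card U" "1 \<le> b" shows "rr U b ^ b = 4 * real b * real (card U)"
proof -
  have pos: "0 < 4 * real b * real (card U)" using assms by simp
  have rp: "0 < rr U b" unfolding rr_def using pos by (simp only: powr_gt_zero)
  have "rr U b ^ b = rr U b powr real b" using powr_realpow[OF rp] by simp
  also have "\<dots> = (4 * real b * real (card U)) powr (1 / real b * real b)" unfolding rr_def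
    by (simp add: powr_powr)
  also have "1 / real b * real b = 1" using assms by simp
  also have "(4 * real b * real (card U)) powr 1 = 4 * real b * real (card U)" using pos by simp
  finally show ?thesis .
qed

lemma four_pow: "1 \<le> b \<Longrightarrow> 4 * real b \<le> 4 ^ b"
proof (induction b rule: dec_induct)
  case base thus ?case by simp
next
  case (step m)
  have "4 * real (Suc m) = 4 * real m + 4" by simp
  also have "\<dots> \<le> 4 ^ m + 4" using step by simp
  also have "\<dots> \<le> 4 ^ Suc m"
  proof -
    have "(4::real) \<le> 4 ^ m" using step(1) by (metis one_le_numeral power_increasing power_one_right)
    thus ?thesis by simp
  qed
  finally show ?case .
qed

lemma rr_bound: assumes "0 < card U" "1 \<le> b"
  shows "rr U b \<le> 4 * real (card U) powr (1 / real b)"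
proof -
  have "rr U b = (4 * real b) powr (1 / real b) * real (card U) powr (1 / real b)"
    unfolding rr_def using assms by (simp add: powr_mult)
  also have "(4 * real b) powr (1 / real b) \<le> (4 ^ b) powr (1 / real b)"
    using four_pow[OF assms(2)] assms by (intro powr_mono2) auto
  also have "(4 ^ b) powr (1 / real b) = (4::real)"
    using assms by (simp add: powr_realpow[symmetric] powr_powr)
  finally show ?thesis by (simp add: mult_right_mono)
qed

lemma leader_val: assumes "valid_decl U k d" "1 \<le> k" "finite U" "0 < card U" "1 \<le> b"
  "0 < eps" "eps < 1"
  shows "vmax d \<le> ext_val d (choose_set d (\<lambda>_. pz U b eps (vmax d)))"
proof -
  obtain S where S: "S \<in> snd d" "vmax d = fst d S" using vmax_attained[OF assms(1,2)] by blast
  have Ssub: "S \<subseteq> U" and v0: "0 \<le> vmax d" using assms(1) S unfolding valid_decl_def by auto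
  let ?p = "pz U b eps (vmax d)"
  have p0: "0 \<le> ?p" unfolding pz_def using v0 assms by simp
  have "(\<Sum>e\<in>S. ?p) = real (card S) * ?p" by simp
  also have "\<dots> \<le> real (card U) * ?p"
    using card_mono[OF assms(3) Ssub] p0 by (intro mult_right_mono) auto
  also have "\<dots> = (1 + eps) * vmax d / (4 * real b)"
  proof -
    have "real (card U) \<noteq> 0" "real b \<noteq> 0" using assms by auto
    thus ?thesis unfolding pz_def by (simp add: field_simps)
  qed
  also have "\<dots> \<le> vmax d"
  proof -
    have "(1 + eps) * vmax d \<le> 4 * real b * vmax d"
      using assms v0 by (intro mult_right_mono) auto
    thus ?thesis using assms by (simp add: divide_le_eq mult.commute)
  qed
  finally have "(\<Sum>e\<in>S. ?p) \<le> fst d S" using S by simp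
  from cs_best[OF assms(1) S(1) this] S show ?thesis by simp
qed



lemma vmax_nonneg: "valid_decl U k d \<Longrightarrow> 1 \<le> k \<Longrightarrow> 0 \<le> vmax d"
  using vmax_attained[of U k d] unfolding valid_decl_def by force

lemma card_U_pos: "valid_decl U k d \<Longrightarrow> 1 \<le> k \<Longrightarrow> finite U \<Longrightarrow> 0 < card U"
proof -
  assume a: "valid_decl U k d" "1 \<le> k" "finite U"
  then obtain S where "S \<in> snd d" using vmax_attained by blast
  hence "S \<noteq> {}" "S \<subseteq> U" using a unfolding valid_decl_def by auto
  thus ?thesis using a by (auto simp: card_gt_0_iff)
qed

lemma mono_choice:
  assumes vd: "valid_decl U k d" and vt: "valid_decl U k t" and fU: "finite U"
    and q: "\<forall>e. 0 \<le> q e"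
    and ver: "ext_val d (choose_set d q) \<le> ext_val t (choose_set d q)"
  shows "ext_val t (choose_set d q) \<le> ext_val t (choose_set t q)"
proof (cases "\<exists>S\<in>snd t. S \<subseteq> choose_set d q")
  case False
  thus ?thesis using ext_nonneg[OF vt] by (simp add: ext_val_alt)
next
  case True
  let ?T = "choose_set d q"
  obtain S where S: "S \<in> snd t" "S \<subseteq> ?T" "ext_val t ?T = fst t S"
    using ext_attained[OF vt True] by blast
  have "S \<noteq> {}" using S vt unfolding valid_decl_def by auto
  hence "?T \<noteq> {}" using S by auto
  hence T: "?T \<in> snd d" "(\<Sum>e\<in>?T. q e) \<le> fst d ?T" using cs_in[OF vd] by auto
  have "finite ?T" using cs_sub[OF vd] fU by (rule finite_subset)
  hence "(\<Sum>e\<in>S. q e) \<le> (\<Sum>e\<in>?T. q e)" using S q by (intro sum_mono2) auto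
  also have "\<dots> \<le> fst d ?T" by (rule T)
  also have "\<dots> \<le> ext_val d ?T" using ext_ge[OF vd T(1)] by simp
  also have "\<dots> \<le> fst t S" using ver S by simp
  finally have "fst t S \<le> ext_val t (choose_set t q)" by (rule cs_best[OF vt S(1)])
  thus ?thesis using S by simp
qed

lemma leader_alloc: assumes "0 < n"
  shows "mpu U b eps n d (leader n d) = choose_set (d (leader n d)) (\<lambda>_. pz U b eps (vmax (d (leader n d))))"
proof -
  show ?thesis unfolding mpu_unfold proc_order_def by (simp add: fold_untouched step_alloc)
qed

lemma nonleader_split: assumes "j < n" "i < n" "i \<noteq> j"
  shows "\<exists>as. i \<notin> set as \<and> (\<forall>(d :: nat \<Rightarrow> 'g decl) r st. snd (fold (mpu_step d r) (proc_order n j) st) i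
             = choose_set (d i) (fst (fold (mpu_step d r) as st)))"
proof -
  have P: "distinct (proc_order n j)" "i \<in> set (proc_order n j)" using proc_order_props[OF assms(1)] assms by auto
  obtain as bs where e: "proc_order n j = as @ i # bs" using split_list[OF P(2)] by blast
  have "i \<notin> set as" "i \<notin> set bs" using P(1) e by auto
  thus ?thesis using e fold_split by metis
qed

lemma truthful:
  assumes fU: "finite U" and b: "1 \<le> b" and k: "1 \<le> k" and eps: "0 < eps" "eps < 1"
  shows "truthful_verif U k n (mpu U b eps n)"
  unfolding truthful_verif_def
proof (intro allI impI)
  fix i d t
  assume i: "i < n" and vd: "\<forall>j<n. valid_decl U k (d j)" and vt: "valid_decl U k t"
    and ver: "ext_val (d i) (mpu U b eps n d i) \<le> ext_val t (mpu U b eps n d i)"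
  define d' where "d' = d(i := t)"
  have n0: "0 < n" using i by simp
  have vd': "\<forall>j<n. valid_decl U k (d' j)" using vd vt unfolding d'_def by auto
  have vdi: "valid_decl U k (d i)" using vd i by simp
  have m0: "0 < card U" using card_U_pos[OF vt k fU] .
  define j where "j = leader n d"
  define j' where "j' = leader n d'"
  note Lj = leader_props[OF n0, of d, folded j_def]
  note Lj' = leader_props[OF n0, of d', folded j'_def]
  have d'i: "d' i = t" unfolding d'_def by simp
  have d'o: "\<And>x. x \<noteq> i \<Longrightarrow> d' x = d x" unfolding d'_def by simp
  show "ext_val t (mpu U b eps n d i) \<le> ext_val t (mpu U b eps n d' i)"
  proof (cases "i = j'")
    case True
    have "mpu U b eps n d' i = choose_set t (\<lambda>_. pz U b eps (vmax t))"
      using leader_alloc[OF n0, of U b eps d'] True d'i unfolding j'_def by simp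
    hence "vmax t \<le> ext_val t (mpu U b eps n d' i)"
      using leader_val[OF vt k fU m0 b eps] by simp
    thus ?thesis using ext_le_vmax[OF vt] by (meson order.trans)
  next
    case ni': False
    show ?thesis
    proof (cases "i = j")
      case True
      have A: "mpu U b eps n d i = choose_set (d i) (\<lambda>_. pz U b eps (vmax (d i)))"
        using leader_alloc[OF n0, of U b eps d] True unfolding j_def by simp
      have "vmax (d i) \<le> ext_val (d i) (mpu U b eps n d i)"
        using leader_val[OF vdi k fU m0 b eps] A by simp
      also have "\<dots> \<le> ext_val t (mpu U b eps n d i)" by (rule ver)
      also have "\<dots> \<le> vmax t" by (rule ext_le_vmax[OF vt])
      finally have le: "vmax (d i) \<le> vmax (d' i)" using d'i by simp
      have "d' j' = d j'" using d'o ni' by auto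
      hence "vmax (d' j') \<le> vmax (d j)" using Lj Lj' by simp
      moreover have "vmax (d' i) \<le> vmax (d' j')" using Lj' i by simp
      ultimately have eq: "vmax (d' i) = vmax (d' j')" using le True by simp
      have "j' \<le> i"
      proof (rule ccontr)
        assume "\<not> j' \<le> i" hence "vmax (d' i) < vmax (d' j')" using Lj' by simp
        thus False using eq by simp
      qed
      hence "j' < i" using ni' by simp
      hence "vmax (d j') < vmax (d j)" using Lj True by simp
      moreover have "vmax (d j') = vmax (d' j')" using d'o ni' by auto
      ultimately show ?thesis using eq le True by simp
    next
      case ni: False
      have ej: "vmax (d j) = vmax (d j')"
      proof -
        have "vmax (d j') \<le> vmax (d j)" using Lj Lj' by simp
        moreover have "vmax (d' j) \<le> vmax (d' j')" using Lj Lj' by simp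
        moreover have "d' j = d j" "d' j' = d j'" using d'o ni ni' by auto
        ultimately show ?thesis by simp
      qed
      have jj: "j = j'"
      proof (rule ccontr)
        assume "j \<noteq> j'"
        hence "j < j' \<or> j' < j" by arith
        thus False
        proof
          assume "j < j'" hence "vmax (d' j) < vmax (d' j')" using Lj' by simp
          moreover have "d' j = d j" "d' j' = d j'" using d'o ni ni' by auto
          ultimately show False using ej by simp
        next
          assume "j' < j" hence "vmax (d j') < vmax (d j)" using Lj by simp
          thus False using ej by simp
        qed
      qed
      have jn: "j < n" using Lj by simp
      obtain as where as: "i \<notin> set as" and
        F0: "\<forall>(dd :: nat \<Rightarrow> 'a decl) r st. snd (fold (mpu_step dd r) (proc_order n j) st) i
             = choose_set (dd i) (fst (fold (mpu_step dd r) as st))"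
        using nonleader_split[OF jn i ni] by (elim exE conjE)
      note F = F0[rule_format]
      define st0 where "st0 = ((\<lambda>_::'a. pz U b eps (vmax (d j))), (\<lambda>_::nat. ({}::'a set)))"
      define q where "q = fst (fold (mpu_step d (rr U b)) as st0)"
      have st0': "st0 = ((\<lambda>_::'a. pz U b eps (vmax (d' j))), (\<lambda>_::nat. ({}::'a set)))"
      proof -
        have "d' j = d j" using d'o ni by auto
        thus ?thesis unfolding st0_def by simp
      qed
      have A1: "mpu U b eps n d i = choose_set (d i) q"
        unfolding mpu_unfold j_def[symmetric] q_def st0_def by (rule F)
      have "fold (mpu_step d' (rr U b)) as st0 = fold (mpu_step d (rr U b)) as st0"
      proof (intro fold_cong_d ballI)
        fix x assume "x \<in> set as" hence "x \<noteq> i" using as by auto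
        thus "d' x = d x" by (rule d'o)
      qed
      hence A2: "mpu U b eps n d' i = choose_set t q"
        unfolding mpu_unfold j'_def[symmetric] jj[symmetric] q_def st0' [symmetric]
        using F[of d' "rr U b" st0] d'i by simp
      have vj: "valid_decl U k (d j)" using vd Lj by simp
      have "\<forall>e. 0 \<le> q e" unfolding q_def
        using rr_ge1[OF m0 b] vmax_nonneg[OF vj k] m0 eps
        by (intro fold_nonneg) (auto simp: st0_def pz_def)
      thus ?thesis using mono_choice[OF vdi vt fU] ver A1 A2 by simp
    qed
  qed
qed



definition Inv :: "real \<Rightarrow> real \<Rightarrow> nat \<Rightarrow> nat set \<Rightarrow> ('g \<Rightarrow> real) \<times> (nat \<Rightarrow> 'g set) \<Rightarrow> bool" where
  "Inv p0 r b D st \<longleftrightarrow> (\<forall>e. fst st e = p0 * r ^ card {i\<in>D. e \<in> snd st i} \<and> card {i\<in>D. e \<in> snd st i} \<le> b)"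

lemma Inv_step:
  assumes fD: "finite D" and x: "x \<notin> D" and I: "Inv p0 r b D st" and r: "0 < r" and p0: "0 \<le> p0"
    and mu: "p0 * r ^ b = mu" and vx: "valid_decl U k (d x)" and fU: "finite U"
    and lt: "\<forall>S\<in>snd (d x). fst (d x) S < mu"
  shows "Inv p0 r b (insert x D) (mpu_step d r x st)"
  unfolding Inv_def
proof
  fix e
  let ?S = "choose_set (d x) (fst st)"
  let ?C = "{i\<in>D. e \<in> snd st i}"
  have set_eq: "{i\<in>insert x D. e \<in> snd (mpu_step d r x st) i} = (if e \<in> ?S then insert x ?C else ?C)"
    using x by (auto simp: step_alloc)
  have finC: "finite ?C" using fD by simp
  have xC: "x \<notin> ?C" using x by simp
  have cardeq: "card {i\<in>insert x D. e \<in> snd (mpu_step d r x st) i} = (if e \<in> ?S then Suc (card ?C) else card ?C)"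
    unfolding set_eq using finC xC by simp
  have Ie: "fst st e = p0 * r ^ card ?C" "card ?C \<le> b" using I unfolding Inv_def by auto
  have pnn: "\<forall>e'. 0 \<le> fst st e'" using I p0 r unfolding Inv_def by simp
  have bound: "e \<in> ?S \<Longrightarrow> card ?C < b"
  proof (rule ccontr)
    assume eS: "e \<in> ?S" and "\<not> card ?C < b"
    hence cb: "card ?C = b" using Ie by simp
    have ne: "?S \<noteq> {}" using eS by auto
    have Sin: "?S \<in> snd (d x)" "(\<Sum>e'\<in>?S. fst st e') \<le> fst (d x) ?S" using cs_in[OF vx ne] by auto
    have "finite ?S" using cs_sub[OF vx] fU by (rule finite_subset)
    hence "fst st e \<le> (\<Sum>e'\<in>?S. fst st e')" using eS pnn by (intro member_le_sum) auto
    moreover have "fst st e = mu" using Ie cb mu by simp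
    ultimately have "mu \<le> fst (d x) ?S" using Sin by simp
    thus False using lt Sin by fastforce
  qed
  show "fst (mpu_step d r x st) e = p0 * r ^ card {i\<in>insert x D. e \<in> snd (mpu_step d r x st) i} \<and>
        card {i\<in>insert x D. e \<in> snd (mpu_step d r x st) i} \<le> b"
    unfolding cardeq step_price using Ie bound by auto
qed

lemma Inv_fold:
  assumes "distinct xs" "set xs \<inter> D = {}" "finite D" "Inv p0 r b D st" "0 < r" "0 \<le> p0"
    "p0 * r ^ b = mu" "finite U" "\<forall>x\<in>set xs. valid_decl U k (d x) \<and> (\<forall>S\<in>snd (d x). fst (d x) S < mu)"
  shows "Inv p0 r b (D \<union> set xs) (fold (mpu_step d r) xs st)"
  using assms
proof (induction xs arbitrary: D st)
  case Nil thus ?case by simp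
next
  case (Cons x xs)
  have "Inv p0 r b (insert x D) (mpu_step d r x st)"
    using Cons.prems by (intro Inv_step[where U=U and k=k and mu=mu]) auto
  hence "Inv p0 r b (insert x D \<union> set xs) (fold (mpu_step d r) xs (mpu_step d r x st))"
    using Cons.prems by (intro Cons.IH) auto
  thus ?case by simp
qed

lemma feasible:
  assumes fU: "finite U" and b: "1 \<le> b" and k: "1 \<le> k" and eps: "0 < eps" "eps < 1"
    and vd: "\<forall>i<n. valid_decl U k (d i)" and pos: "\<exists>i<n. vmax (d i) > 0"
  shows "feasible_alloc U b n (mpu U b eps n d)"
proof -
  obtain i0 where i0: "i0 < n" "vmax (d i0) > 0" using pos by blast
  have n0: "0 < n" using i0 by simp
  define j where "j = leader n d"
  note Lj = leader_props[OF n0, of d, folded j_def]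
  have vj: "valid_decl U k (d j)" using vd Lj by simp
  have m0: "0 < card U" using card_U_pos[OF vj k fU] .
  define v where "v = vmax (d j)"
  have v0: "0 < v" using Lj i0 unfolding v_def by force
  define mu where "mu = (1 + eps) * v"
  define p0 where "p0 = pz U b eps v"
  define r where "r = rr U b"
  have r0: "0 < r" using rr_ge1[OF m0 b] unfolding r_def by simp
  have pp: "0 \<le> p0" unfolding p0_def pz_def using v0 eps by simp
  have mueq: "p0 * r ^ b = mu"
    unfolding r_def rr_pow[OF m0 b] p0_def pz_def mu_def using m0 b by simp
  have lt: "\<forall>x\<in>set (proc_order n j). valid_decl U k (d x) \<and> (\<forall>S\<in>snd (d x). fst (d x) S < mu)"
  proof
    fix x assume "x \<in> set (proc_order n j)"
    hence x: "x < n" using proc_order_props[of j n] Lj by auto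
    have "\<forall>S\<in>snd (d x). fst (d x) S < mu"
    proof
      fix S assume "S \<in> snd (d x)"
      hence "fst (d x) S \<le> vmax (d x)" using vmax_ge vd x by blast
      also have "\<dots> \<le> v" using Lj x unfolding v_def by simp
      also have "\<dots> < mu" unfolding mu_def using v0 eps by simp
      finally show "fst (d x) S < mu" .
    qed
    thus "valid_decl U k (d x) \<and> (\<forall>S\<in>snd (d x). fst (d x) S < mu)" using vd x by simp
  qed
  have I0: "Inv p0 r b {} ((\<lambda>_. p0), (\<lambda>_. {}))" unfolding Inv_def by simp
  have IF: "Inv p0 r b ({} \<union> set (proc_order n j)) (fold (mpu_step d r) (proc_order n j) ((\<lambda>_. p0), (\<lambda>_. {})))"
    using proc_order_props[of j n] Lj by (intro Inv_fold[OF _ _ _ I0 r0 pp mueq fU lt]) auto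
  have A: "mpu U b eps n d = snd (fold (mpu_step d r) (proc_order n j) ((\<lambda>_. p0), (\<lambda>_. {})))"
    unfolding mpu_unfold j_def r_def p0_def v_def ..
  have S: "set (proc_order n j) = {..<n}" using proc_order_props[of j n] Lj by auto
  show ?thesis unfolding feasible_alloc_def
  proof (intro conjI allI impI)
    fix i assume i: "i < n"
    hence "i \<in> set (proc_order n j)" using S by simp
    then obtain q where "mpu U b eps n d i = choose_set (d i) q"
      using fold_choice[of "proc_order n j" i r "((\<lambda>_. p0), (\<lambda>_. {}))" d] proc_order_props[of j n] Lj
        rr_ge1[OF m0 b] pp unfolding A r_def by auto
    thus "mpu U b eps n d i \<subseteq> U" using cs_sub vd i by metis
  next
    fix e
    have "card {i\<in>{..<n}. e \<in> mpu U b eps n d i} \<le> b" using IF unfolding Inv_def S A by simp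
    thus "card {i. i < n \<and> e \<in> mpu U b eps n d i} \<le> b" by simp
  qed
qed



lemma opt_bound:
  assumes vt: "valid_decl U k t" and fU: "finite U" and Ob: "Ob \<subseteq> U"
    and q: "\<forall>e. 0 \<le> q e \<and> q e \<le> ps e"
  shows "ext_val t Ob \<le> ext_val t (choose_set t q) + (\<Sum>e\<in>Ob. ps e)"
proof -
  have fO: "finite Ob" by (rule finite_subset[OF Ob fU])
  have psO: "0 \<le> (\<Sum>e\<in>Ob. ps e)" using q by (intro sum_nonneg) (meson order.trans)
  have a0: "0 \<le> ext_val t (choose_set t q)" by (rule ext_nonneg[OF vt])
  show ?thesis
  proof (cases "\<exists>S\<in>snd t. S \<subseteq> Ob")
    case False thus ?thesis using a0 psO by (simp add: ext_val_alt)
  next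
    case True
    obtain S where S: "S \<in> snd t" "S \<subseteq> Ob" "ext_val t Ob = fst t S"
      using ext_attained[OF vt True] by blast
    show ?thesis
    proof (cases "(\<Sum>e\<in>S. q e) \<le> fst t S")
      case True
      thus ?thesis using cs_best[OF vt S(1) True] S psO by simp
    next
      case False
      have "(\<Sum>e\<in>S. q e) \<le> (\<Sum>e\<in>S. ps e)" using q by (intro sum_mono) auto
      also have "\<dots> \<le> (\<Sum>e\<in>Ob. ps e)" using fO S q by (intro sum_mono2) (auto intro: order.trans)
      finally show ?thesis using False S a0 by simp
    qed
  qed
qed

lemma double_count:
  fixes ps :: "'g \<Rightarrow> real"
  assumes fU: "finite U" and X: "feasible_alloc U b n X" and ps: "\<forall>e. 0 \<le> ps e"
  shows "(\<Sum>i<n. \<Sum>e\<in>X i. ps e) \<le> real b * (\<Sum>e\<in>U. ps e)"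
proof -
  have sub: "\<forall>i<n. X i \<subseteq> U" and cb: "\<forall>e. card {i. i < n \<and> e \<in> X i} \<le> b"
    using X unfolding feasible_alloc_def by auto
  have "(\<Sum>i<n. \<Sum>e\<in>X i. ps e) = (\<Sum>i<n. \<Sum>e\<in>U. if e \<in> X i then ps e else 0)"
  proof (rule sum.cong[OF refl])
    fix i assume "i \<in> {..<n}"
    hence "X i \<subseteq> U" using sub by simp
    thus "(\<Sum>e\<in>X i. ps e) = (\<Sum>e\<in>U. if e \<in> X i then ps e else 0)"
      using fU by (simp add: sum.If_cases Int_absorb1)
  qed
  also have "\<dots> = (\<Sum>e\<in>U. \<Sum>i<n. if e \<in> X i then ps e else 0)" by (rule sum.swap)
  also have "\<dots> = (\<Sum>e\<in>U. real (card {i. i < n \<and> e \<in> X i}) * ps e)"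
  proof (rule sum.cong[OF refl])
    fix e
    have "{..<n} \<inter> {i. e \<in> X i} = {i. i < n \<and> e \<in> X i}" by auto
    thus "(\<Sum>i<n. if e \<in> X i then ps e else 0) = real (card {i. i < n \<and> e \<in> X i}) * ps e"
      by (simp add: sum.If_cases)
  qed
  also have "\<dots> \<le> (\<Sum>e\<in>U. real b * ps e)"
    using cb ps by (intro sum_mono mult_right_mono) auto
  finally show ?thesis by (simp add: sum_distrib_left)
qed

lemma approx:
  assumes fU: "finite U" and b: "1 \<le> b" and k: "1 \<le> k" and eps: "0 < eps" "eps < 1"
    and vt: "\<forall>i<n. valid_decl U k (t i)" and X: "feasible_alloc U b n X"
  shows "welfare n t X \<le> 5 * real b * real (card U) powr (1 / real b) * welfare n t (mpu U b eps n t)"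
proof (cases "n = 0")
  case True thus ?thesis by (simp add: welfare_def)
next
  case False
  hence n0: "0 < n" by simp
  define j where "j = leader n t"
  note Lj = leader_props[OF n0, of t, folded j_def]
  have vj: "valid_decl U k (t j)" using vt Lj by simp
  have m0: "0 < card U" using card_U_pos[OF vj k fU] .
  define v where "v = vmax (t j)"
  have v0: "0 \<le> v" using vmax_nonneg[OF vj k] unfolding v_def .
  define p0 where "p0 = pz U b eps v"
  define r where "r = rr U b"
  define M where "M = real (card U) powr (1 / real b)"
  have r1: "1 \<le> r" using rr_ge1[OF m0 b] unfolding r_def .
  have rM: "r \<le> 4 * M" unfolding r_def M_def by (rule rr_bound[OF m0 b])
  have M1: "1 \<le> M" unfolding M_def using m0 by (intro ge_one_powr_ge_zero) auto
  have pp: "0 \<le> p0" unfolding p0_def pz_def using v0 eps by simp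
  define xs where "xs = proc_order n j"
  have xsP: "distinct xs" "set xs = {..<n}" using proc_order_props[of j n] Lj unfolding xs_def by auto
  define st0 where "st0 = (((\<lambda>_. p0) :: 'a \<Rightarrow> real), ((\<lambda>_. {}) :: nat \<Rightarrow> 'a set))"
  define Fin where "Fin = fold (mpu_step t r) xs st0"
  have A: "mpu U b eps n t = snd Fin"
    unfolding mpu_unfold Fin_def xs_def st0_def j_def r_def p0_def v_def ..
  have nn0: "\<forall>e. 0 \<le> fst st0 e" unfolding st0_def using pp by simp
  have psnn: "\<forall>e. 0 \<le> fst Fin e" unfolding Fin_def using fold_nonneg[OF _ nn0] r1 by simp
  define ALG where "ALG = welfare n t (mpu U b eps n t)"
  define Ps where "Ps = (\<Sum>e\<in>U. fst Fin e)"
  have ALGeq: "ALG = (\<Sum>i\<in>set xs. ext_val (t i) (snd Fin i))"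
    unfolding ALG_def welfare_def A xsP(2) ..
  have ALG0: "0 \<le> ALG" unfolding ALG_def welfare_def using vt by (intro sum_nonneg) (auto intro: ext_nonneg)
  have per: "\<forall>i<n. ext_val (t i) (X i) \<le> ext_val (t i) (snd Fin i) + (\<Sum>e\<in>X i. fst Fin e)"
  proof (intro allI impI)
    fix i assume i: "i < n"
    obtain q where q: "\<forall>e. 0 \<le> q e \<and> q e \<le> fst Fin e" "snd Fin i = choose_set (t i) q"
      using fold_choice[of xs i r st0 t] xsP i r1 nn0 unfolding Fin_def by auto
    have "X i \<subseteq> U" using X i unfolding feasible_alloc_def by simp
    thus "ext_val (t i) (X i) \<le> ext_val (t i) (snd Fin i) + (\<Sum>e\<in>X i. fst Fin e)"
      using opt_bound[OF _ fU _ q(1), of k "t i"] vt i q(2) by simp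
  qed
  have "welfare n t X \<le> (\<Sum>i<n. ext_val (t i) (snd Fin i) + (\<Sum>e\<in>X i. fst Fin e))"
    unfolding welfare_def using per by (intro sum_mono) auto
  also have "\<dots> = ALG + (\<Sum>i<n. \<Sum>e\<in>X i. fst Fin e)"
    by (simp add: sum.distrib ALG_def welfare_def A)
  also have "\<dots> \<le> ALG + real b * Ps"
    using double_count[OF fU X psnn] unfolding Ps_def by simp
  finally have O1: "welfare n t X \<le> ALG + real b * Ps" .
  have "Ps \<le> (\<Sum>e\<in>U. fst st0 e) + (r - 1) * ALG"
    unfolding Ps_def Fin_def ALGeq
    using fold_sum[OF fU xsP(1) _ r1 nn0, of k t] vt xsP(2) by (simp add: Fin_def)
  also have "(\<Sum>e\<in>U. fst st0 e) = (1 + eps) * v / (4 * real b)"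
  proof -
    have "real (card U) \<noteq> 0" "real b \<noteq> 0" using m0 b by auto
    thus ?thesis unfolding st0_def p0_def pz_def by (simp add: field_simps)
  qed
  finally have P1: "Ps \<le> (1 + eps) * v / (4 * real b) + (r - 1) * ALG" .
  have "v \<le> ext_val (t j) (mpu U b eps n t j)"
    using leader_alloc[OF n0, of U b eps t] leader_val[OF vj k fU m0 b eps] unfolding j_def v_def p0_def
    by simp
  also have "\<dots> \<le> ALG" unfolding ALG_def welfare_def
    using Lj vt by (intro member_le_sum) (auto intro: ext_nonneg)
  finally have vA: "v \<le> ALG" .
  have "real b * Ps \<le> real b * ((1 + eps) * v / (4 * real b) + (r - 1) * ALG)"
    using P1 b by (intro mult_left_mono) auto
  also have "\<dots> = (1 + eps) * v / 4 + real b * (r - 1) * ALG" using b by (simp add: field_simps)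
  also have "(1 + eps) * v / 4 \<le> ALG / 2"
  proof -
    have "(1 + eps) * v \<le> 2 * v" using v0 eps by (intro mult_right_mono) auto
    thus ?thesis using vA by (simp add: mult.commute)
  qed
  finally have bP: "real b * Ps \<le> ALG / 2 + real b * (r - 1) * ALG" by simp
  have "real b * (r - 1) * ALG \<le> real b * (4 * M - 1) * ALG"
    using rM ALG0 b by (intro mult_right_mono mult_left_mono) auto
  hence "welfare n t X \<le> ALG + ALG / 2 + real b * (4 * M - 1) * ALG" using O1 bP by simp
  also have "\<dots> = ALG / 2 + (ALG - real b * ALG) + 4 * real b * M * ALG" by (simp add: algebra_simps)
  also have "\<dots> \<le> ALG / 2 + 4 * real b * M * ALG"
  proof -
    have "ALG \<le> real b * ALG" using b ALG0 by (simp add: mult_right_mono[of 1 "real b" ALG, simplified])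
    thus ?thesis by simp
  qed
  also have "\<dots> \<le> 5 * real b * M * ALG"
  proof -
    have "1 \<le> real b * M" using b M1 by (metis mult_mono' of_nat_1 of_nat_le_iff zero_le_one mult_1)
    hence h: "ALG \<le> real b * M * ALG" using ALG0 by (simp add: mult_right_mono[of 1 _ ALG, simplified])
    have "ALG / 2 + 4 * real b * M * ALG = ALG / 2 + 4 * (real b * M * ALG)" by simp
    also have "\<dots> \<le> 5 * (real b * M * ALG)" using h ALG0 by linarith
    finally show ?thesis by (simp add: mult.assoc)
  qed
  finally show ?thesis unfolding M_def ALG_def by simp
qed


theorem theorem5:
  shows "(\<forall>(U :: 'g set) b k n eps.
            finite U \<and> b \<ge> 1 \<and> k \<ge> 1 \<and> 0 < eps \<and> eps < 1 \<longrightarrow>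
              truthful_verif U k n (mpu U b eps n) \<and>
              (\<forall>d. (\<forall>i<n. valid_decl U k (d i)) \<and> (\<exists>i<n. vmax (d i) > 0) \<longrightarrow>
                   feasible_alloc U b n (mpu U b eps n d)))
       \<and> (\<exists>C > 0. \<forall>(U :: 'g set) b k n eps t.
            finite U \<and> b \<ge> 1 \<and> k \<ge> 1 \<and> 0 < eps \<and> eps < 1 \<and>
            (\<forall>i<n. valid_decl U k (t i)) \<longrightarrow>
              (\<forall>X. feasible_alloc U b n X \<longrightarrow>
                 welfare n t X \<le> C * real b * real (card U) powr (1 / real b)
                                   * welfare n t (mpu U b eps n t)))"
proof (intro conjI)
  show "\<forall>(U :: 'g set) b k n eps.
            finite U \<and> b \<ge> 1 \<and> k \<ge> 1 \<and> 0 < eps \<and> eps < 1 \<longrightarrow>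
              truthful_verif U k n (mpu U b eps n) \<and>
              (\<forall>d. (\<forall>i<n. valid_decl U k (d i)) \<and> (\<exists>i<n. vmax (d i) > 0) \<longrightarrow>
                   feasible_alloc U b n (mpu U b eps n d))"
  proof (intro allI impI conjI)
    fix U :: "'g set" and b k n :: nat and eps :: real and d :: "nat \<Rightarrow> 'g decl"
    assume H: "finite U \<and> b \<ge> 1 \<and> k \<ge> 1 \<and> 0 < eps \<and> eps < 1"
    show "truthful_verif U k n (mpu U b eps n)"
      using truthful[of U b k eps n] H by simp
    assume H2: "(\<forall>i<n. valid_decl U k (d i)) \<and> (\<exists>i<n. vmax (d i) > 0)"
    show "feasible_alloc U b n (mpu U b eps n d)"
      using feasible[of U b k eps n d] H H2 by simp
  qed
next
  show "\<exists>C > 0. \<forall>(U :: 'g set) b k n eps t.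
            finite U \<and> b \<ge> 1 \<and> k \<ge> 1 \<and> 0 < eps \<and> eps < 1 \<and>
            (\<forall>i<n. valid_decl U k (t i)) \<longrightarrow>
              (\<forall>X. feasible_alloc U b n X \<longrightarrow>
                 welfare n t X \<le> C * real b * real (card U) powr (1 / real b)
                                   * welfare n t (mpu U b eps n t))"
  proof (rule exI[of _ 5], intro conjI allI impI)
    fix U :: "'g set" and b k n :: nat and eps :: real and t :: "nat \<Rightarrow> 'g decl" and X
    assume H: "finite U \<and> b \<ge> 1 \<and> k \<ge> 1 \<and> 0 < eps \<and> eps < 1 \<and> (\<forall>i<n. valid_decl U k (t i))"
      and X: "feasible_alloc U b n X"
    show "welfare n t X \<le> 5 * real b * real (card U) powr (1 / real b) * welfare n t (mpu U b eps n t)"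
      using approx[of U b k eps n t X] H X by simp
  qed simp
qed

end
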